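(* Let $\alpha\ge-1/2$, $a\ge1$, $u_j(x)=x^{aj}$, $j=1,2,\dots$. Then there is $C$ independent of $j$ such that for all $j\ge1$ and all $f\in L^2(\mathbb{R}_+,d\mu_\alpha)$, \[ \int_0^\infty|j\,u_j\mathcal{T}^{\alpha+aj}(u_j^{-1}f)(x)|^2d\mu_\alpha(x)\le C\int_0^\infty|f(x)|^2d\mu_\alpha(x). \]
   Context: For $\alpha>-1$, $d\mu_\alpha(x)=x^{2\alpha+1}dx$ on $\mathbb{R}_+$, $\langle f,g\rangle_{d\mu_\alpha}=\int_0^\infty f\bar g\,d\mu_\alpha$. Laguerre functions $\ell_k^\alpha(x)=\big(\tfrac{2\Gamma(k+1)}{\Gamma(k+\alpha+1)}\big)^{1/2}L_k^\alpha(x^2)e^{-x^2/2}$ (orthonormal basis of $L^2(\mathbb{R}_+,d\mu_\alpha)$). $L_\alpha^{-1/2}f=\sum_{k\ge0}(4k+2\alpha+2)^{-1/2}\langle f,\ell_k^\alpha\rangle_{d\mu_\alpha}\ell_k^\alpha$ and $\mathcal{T}^\alpha f(x)=\frac1xL_\alpha^{-1/2}f(x)$. *)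

theory Defs
  imports "HOL-Analysis.Analysis"
begin

definition mu :: "real \<Rightarrow> real measure" where
  "mu \<alpha> = density lborel (\<lambda>x. ennreal (indicator {0<..} x * x powr (2 * \<alpha> + 1)))"

definition L2 :: "real measure \<Rightarrow> (real \<Rightarrow> complex) set" where
  "L2 M = {f. f \<in> borel_measurable M \<and> (\<integral>\<^sup>+ x. ennreal ((cmod (f x))\<^sup>2) \<partial>M) < \<infinity>}"

definition laguerre_poly :: "real \<Rightarrow> nat \<Rightarrow> real \<Rightarrow> real" where
  "laguerre_poly \<alpha> k x = (\<Sum>i\<le>k. (-1) ^ i * ((real k + \<alpha>) gchoose (k - i)) * x ^ i / fact i)"

definition laguerre_fun :: "real \<Rightarrow> nat \<Rightarrow> real \<Rightarrow> real" where
  "laguerre_fun \<alpha> k x =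
     sqrt (2 * Gamma (real k + 1) / Gamma (real k + \<alpha> + 1)) * laguerre_poly \<alpha> k (x\<^sup>2) * exp (- (x\<^sup>2) / 2)"

definition lag_coeff :: "real \<Rightarrow> (real \<Rightarrow> complex) \<Rightarrow> nat \<Rightarrow> complex" where
  "lag_coeff \<alpha> f k = (\<integral> x. f x * cnj (complex_of_real (laguerre_fun \<alpha> k x)) \<partial>mu \<alpha>)"

definition Linv_partial :: "real \<Rightarrow> (real \<Rightarrow> complex) \<Rightarrow> nat \<Rightarrow> real \<Rightarrow> complex" where
  "Linv_partial \<alpha> f n x =
     (\<Sum>k<n. complex_of_real ((4 * real k + 2 * \<alpha> + 2) powr (-1/2)) * lag_coeff \<alpha> f k
              * complex_of_real (laguerre_fun \<alpha> k x))"

definition Linv :: "real \<Rightarrow> (real \<Rightarrow> complex) \<Rightarrow> real \<Rightarrow> complex" where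
  "Linv \<alpha> f = (SOME g. g \<in> borel_measurable (mu \<alpha>) \<and>
       (\<lambda>n. \<integral>\<^sup>+ x. ennreal ((cmod (Linv_partial \<alpha> f n x - g x))\<^sup>2) \<partial>mu \<alpha>) \<longlonglongrightarrow> 0)"

definition Top :: "real \<Rightarrow> (real \<Rightarrow> complex) \<Rightarrow> real \<Rightarrow> complex" where
  "Top \<alpha> f x = Linv \<alpha> f x / complex_of_real x"

end

theory Submission
  imports Defs "HOL-Computational_Algebra.Polynomial" "HOL-Computational_Algebra.Formal_Power_Series"
begin


lemma gamma_moment_nn:
  fixes s :: real assumes s: "s > -1"
  shows "(\<integral>\<^sup>+x. ennreal (indicator {0..} x * x powr (2* s+1) * exp (-(x\<^sup>2))) \<partial>lborel)
         = ennreal (Gamma (s+1) / 2)"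
proof -
  define F where "F t = t powr s / exp t" for t :: real
  have sub: "(\<integral>\<^sup>+t. ennreal (F t * indicator {0..real n ^ 2} t) \<partial>lborel) =
             (\<integral>\<^sup>+x. ennreal (F (x^2) * (2*x) * indicator {0..real n} x) \<partial>lborel)" for n :: nat
  proof -
    have "(\<integral>\<^sup>+t. ennreal (F t * indicator {(0::real)^2..real n ^ 2} t) \<partial>lborel) =
             (\<integral>\<^sup>+x. ennreal (F (x^2) * (2*x) * indicator {0..real n} x) \<partial>lborel)"
      by (rule nn_integral_substitution[where g="\<lambda>x. x^2" and g'="\<lambda>x. 2*x"])
         (auto simp: F_def set_borel_measurable_def intro!: derivative_eq_intros continuous_intros)
    then show ?thesis by simp
  qed
  have lhs: "(\<integral>\<^sup>+t. ennreal (F t * indicator {0..} t) \<partial>lborel) = ennreal (Gamma (s+1))"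
    using Gamma_conv_nn_integral_real[of "s+1"] s by (simp add: F_def mult.commute)
  have supJ: "(\<integral>\<^sup>+t. ennreal (F t * indicator {0..} t) \<partial>lborel) =
        (SUP n. \<integral>\<^sup>+t. ennreal (F t * indicator {0..real n ^ 2} t) \<partial>lborel)"
  proof -
    have "(\<integral>\<^sup>+t. (SUP n. ennreal (F t * indicator {0..real n ^ 2} t)) \<partial>lborel) =
        (SUP n. \<integral>\<^sup>+t. ennreal (F t * indicator {0..real n ^ 2} t) \<partial>lborel)"
    proof (rule nn_integral_monotone_convergence_SUP)
      show "incseq (\<lambda>n t. ennreal (F t * indicator {0..real n ^ 2} t))"
        apply (rule incseq_SucI, rule le_funI)
      proof -
        fix n x
        have "(real n)^2 \<le> (1 + real n)^2" by (rule power_mono) auto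
        then have "x \<le> (real n)^2 \<longrightarrow> x \<le> (1 + real n)^2" by linarith
        then show "ennreal (F x * indicat_real {0..(real n)\<^sup>2} x) \<le> ennreal (F x * indicat_real {0..(real (Suc n))\<^sup>2} x)"
          by (auto simp: F_def indicator_def intro!: ennreal_leI)
      qed
    qed (auto simp: F_def)
    moreover have "(SUP n. ennreal (F t * indicator {0..real n ^ 2} t)) = ennreal (F t * indicator {0..} t)" for t
    proof (cases "t \<ge> 0")
      case True
      obtain N :: nat where N: "t \<le> real N" using real_arch_simple by blast
      have NN: "real N \<le> real N ^ 2"
      proof (cases "N = 0")
        case False then show ?thesis by (intro self_le_power) auto
      qed simp
      have ev: "ennreal (F t * indicator {0..real n ^ 2} t) = ennreal (F t * indicator {0..} t)" if "n \<ge> N" for n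
      proof -
        have "real N ^ 2 \<le> real n ^ 2" using that by (intro power_mono) auto
        then have "t \<le> real n ^ 2" using N NN by linarith
        then show ?thesis using True by (simp add: indicator_def)
      qed
      show ?thesis
      proof (rule antisym)
        show "(SUP n. ennreal (F t * indicator {0..real n ^ 2} t)) \<le> ennreal (F t * indicator {0..} t)"
          by (rule SUP_least) (auto simp: indicator_def F_def intro!: ennreal_leI)
        show "ennreal (F t * indicator {0..} t) \<le> (SUP n. ennreal (F t * indicator {0..real n ^ 2} t))"
          using ev[of N] by (intro SUP_upper2[of N]) auto
      qed
    next
      case False then show ?thesis by (simp add: indicator_def)
    qed
    ultimately show ?thesis by simp
  qed
  moreover have "(\<integral>\<^sup>+x. ennreal (indicator {0..} x * x powr (2* s+1) * exp (-(x\<^sup>2))) \<partial>lborel) =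
        (SUP n. \<integral>\<^sup>+x. ennreal (indicator {0..real n} x * x powr (2* s+1) * exp (-(x\<^sup>2))) \<partial>lborel)"
  proof -
    have "(\<integral>\<^sup>+x. (SUP n. ennreal (indicator {0..real n} x * x powr (2* s+1) * exp (-(x\<^sup>2)))) \<partial>lborel) =
        (SUP n. \<integral>\<^sup>+x. ennreal (indicator {0..real n} x * x powr (2* s+1) * exp (-(x\<^sup>2))) \<partial>lborel)"
    proof (rule nn_integral_monotone_convergence_SUP)
      show "incseq (\<lambda>n x. ennreal (indicator {0..real n} x * x powr (2* s+1) * exp (-(x\<^sup>2))))"
        apply (rule incseq_SucI, rule le_funI)
        by (auto simp: indicator_def intro!: ennreal_leI)
    qed auto
    moreover have "(SUP n. ennreal (indicator {0..real n} x * x powr (2* s+1) * exp (-(x\<^sup>2)))) =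
        ennreal (indicator {0..} x * x powr (2* s+1) * exp (-(x\<^sup>2)))" for x
    proof (cases "x \<ge> 0")
      case True
      obtain N :: nat where N: "x \<le> real N" using real_arch_simple by blast
      show ?thesis
      proof (rule antisym)
        show "(SUP n. ennreal (indicator {0..real n} x * x powr (2* s+1) * exp (-(x\<^sup>2)))) \<le> ennreal (indicator {0..} x * x powr (2* s+1) * exp (-(x\<^sup>2)))"
          by (rule SUP_least) (auto simp: indicator_def intro!: ennreal_leI)
        show "ennreal (indicator {0..} x * x powr (2* s+1) * exp (-(x\<^sup>2))) \<le> (SUP n. ennreal (indicator {0..real n} x * x powr (2* s+1) * exp (-(x\<^sup>2))))"
          using N True by (intro SUP_upper2[of N]) (auto simp: indicator_def)
      qed
    next
      case False then show ?thesis by (simp add: indicator_def)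
    qed
    ultimately show ?thesis by simp
  qed
  moreover have "(\<integral>\<^sup>+x. ennreal (indicator {0..real n} x * x powr (2* s+1) * exp (-(x\<^sup>2))) \<partial>lborel)
     = (\<integral>\<^sup>+t. ennreal (F t * indicator {0..real n ^ 2} t) \<partial>lborel) / 2" for n :: nat
  proof -
    have "(\<integral>\<^sup>+x. ennreal (F (x^2) * (2*x) * indicator {0..real n} x) \<partial>lborel) =
          (\<integral>\<^sup>+x. 2 * ennreal (indicator {0..real n} x * x powr (2* s+1) * exp (-(x\<^sup>2))) \<partial>lborel)"
    proof (rule nn_integral_cong)
      fix x :: real
      show "ennreal (F (x^2) * (2*x) * indicator {0..real n} x) = 2 * ennreal (indicator {0..real n} x * x powr (2* s+1) * exp (-(x\<^sup>2)))"
      proof (cases "x > 0")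
        case True
        have p1: "(x^2) powr s = x powr (2 * s)"
        proof -
          have "(x^2) powr s = (x powr 2) powr s" using True by simp
          also have "\<dots> = x powr (2 * s)" by (rule powr_powr)
          finally show ?thesis .
        qed
        have p2: "x powr (2 * s) * x = x powr (2 * s + 1)"
          using True by (simp add: powr_add)
        have e: "F (x^2) * (2*x) * indicator {0..real n} x = 2 * (indicator {0..real n} x * x powr (2 * s+1) * exp (-(x\<^sup>2)))"
          unfolding F_def p1 p2[symmetric] by (simp add: exp_minus divide_inverse)
        show ?thesis unfolding e by (subst ennreal_mult') auto
      next
        case False
        then show ?thesis by (auto simp: F_def indicator_def)
      qed
    qed
    also have "\<dots> = 2 * (\<integral>\<^sup>+x. ennreal (indicator {0..real n} x * x powr (2* s+1) * exp (-(x\<^sup>2))) \<partial>lborel)"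
      by (rule nn_integral_cmult) auto
    finally have "(\<integral>\<^sup>+t. ennreal (F t * indicator {0..real n ^ 2} t) \<partial>lborel) = 
       (\<integral>\<^sup>+x. ennreal (indicator {0..real n} x * x powr (2 * s+1) * exp (-(x\<^sup>2))) \<partial>lborel) * 2"
      using sub[of n] by (simp add: mult.commute)
    then show ?thesis by (simp add: ennreal_mult_divide_eq)
  qed
  ultimately have "(\<integral>\<^sup>+x. ennreal (indicator {0..} x * x powr (2 * s+1) * exp (-(x\<^sup>2))) \<partial>lborel)
     = (SUP n. (\<integral>\<^sup>+t. ennreal (F t * indicator {0..real n ^ 2} t) \<partial>lborel) * inverse 2)"
    by (simp add: divide_ennreal_def)
  also have "\<dots> = ennreal (Gamma (s+1)) * inverse 2"
    using lhs supJ
    by (simp add: SUP_mult_right_ennreal[symmetric])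
  also have "\<dots> = ennreal (Gamma (s+1) / 2)"
    using s by (simp add: divide_ennreal_def[symmetric] ennreal_divide_numeral Gamma_real_pos)
  finally show ?thesis .
qed



definition Lam :: "real \<Rightarrow> real poly \<Rightarrow> real" where
  "Lam g p = (\<Sum>i\<le>degree p. coeff p i * Gamma (real i + g + 1))"

lemma Lam_bound: "degree p \<le> n \<Longrightarrow> Lam g p = (\<Sum>i\<le>n. coeff p i * Gamma (real i + g + 1))"
  unfolding Lam_def
  by (rule sum.mono_neutral_left) (auto simp: coeff_eq_0)

lemma Lam_0[simp]: "Lam g 0 = 0" by (simp add: Lam_def)

lemma Lam_add: "Lam g (p + q) = Lam g p + Lam g q"
proof -
  let ?n = "max (degree p) (degree q)"
  have "Lam g (p + q) = (\<Sum>i\<le>?n. coeff (p + q) i * Gamma (real i + g + 1))"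
    by (rule Lam_bound) (simp add: degree_add_le)
  also have "\<dots> = (\<Sum>i\<le>?n. coeff p i * Gamma (real i + g + 1)) + (\<Sum>i\<le>?n. coeff q i * Gamma (real i + g + 1))"
    by (simp add: algebra_simps sum.distrib)
  also have "\<dots> = Lam g p + Lam g q"
    by (simp add: Lam_bound[symmetric])
  finally show ?thesis .
qed

lemma Lam_smult: "Lam g (smult c p) = c * Lam g p"
proof -
  have "Lam g (smult c p) = (\<Sum>i\<le>degree p. coeff (smult c p) i * Gamma (real i + g + 1))"
    by (rule Lam_bound) simp
  then show ?thesis by (simp add: Lam_def sum_distrib_left mult.assoc)
qed

lemma Lam_minus: "Lam g (- p) = - Lam g p"
  using Lam_smult[of g "-1" p] by simp

lemma Lam_diff: "Lam g (p - q) = Lam g p - Lam g q"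
  using Lam_add[of g p "-q"] Lam_minus[of g q] by simp

lemma Lam_2[simp]: "Lam g (2 * p) = 2 * Lam g p"
  unfolding mult_2 by (rule Lam_add)

lemma Lam_numeral[simp]: "Lam g (numeral n * p) = numeral n * Lam g p"
proof -
  have "numeral n * p = smult (numeral n) p" by (simp add: numeral_poly)
  then show ?thesis by (simp add: Lam_smult)
qed

lemma Lam_sum: "Lam g (\<Sum>k\<in>A. f k) = (\<Sum>k\<in>A. Lam g (f k))"
  by (induction A rule: infinite_finite_induct) (auto simp: Lam_add)

lemma Lam_shift: "Lam g (pCons 0 p) = Lam (g + 1) p"
proof -
  have "Lam g (pCons 0 p) = (\<Sum>i\<le>Suc (degree p). coeff (pCons 0 p) i * Gamma (real i + g + 1))"
    by (rule Lam_bound) (simp add: degree_pCons_le)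
  also have "\<dots> = (\<Sum>i\<le>degree p. coeff p i * Gamma (real i + (g + 1) + 1))"
    by (subst sum.atMost_Suc_shift) (simp add: algebra_simps)
  also have "\<dots> = Lam (g+1) p" by (simp add: Lam_def)
  finally show ?thesis .
qed

lemma Lam_pderiv:
  assumes "g > -1"
  shows "Lam (g + 1) (pderiv p) = Lam (g + 1) p - (g + 1) * Lam g p"
proof -
  let ?n = "degree p"
  have G: "Gamma (real i + (g + 1) + 1) = (real i + g + 1) * Gamma (real i + g + 1)" for i
  proof -
    have "real i + g + 1 > 0" using assms by simp
    then have "real i + g + 1 \<notin> \<int>\<^sub>\<le>\<^sub>0" by (auto elim!: nonpos_Ints_cases)
    from Gamma_plus1[OF this] show ?thesis by (simp add: add.assoc)
  qed
  have "Lam (g + 1) (pderiv p) = (\<Sum>i\<le>?n. coeff (pderiv p) i * Gamma (real i + (g + 1) + 1))"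
    by (rule Lam_bound) (simp add: degree_pderiv)
  also have "\<dots> = (\<Sum>i\<le>?n. real (Suc i) * coeff p (Suc i) * Gamma (real (Suc i) + g + 1))"
    by (simp add: coeff_pderiv algebra_simps)
  also have "\<dots> = (\<Sum>i\<le>Suc ?n. real i * coeff p i * Gamma (real i + g + 1))"
    by (subst sum.atMost_Suc_shift) simp
  also have "\<dots> = (\<Sum>i\<le>?n. real i * coeff p i * Gamma (real i + g + 1))"
    by (simp add: coeff_eq_0)
  also have "\<dots> = (\<Sum>i\<le>?n. coeff p i * Gamma (real i + (g + 1) + 1) - (g + 1) * (coeff p i * Gamma (real i + g + 1)))"
    by (rule sum.cong, simp, subst G, simp add: algebra_simps)
  also have "\<dots> = (\<Sum>i\<le>?n. coeff p i * Gamma (real i + (g + 1) + 1)) - (g + 1) * (\<Sum>i\<le>?n. coeff p i * Gamma (real i + g + 1))"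
    by (simp add: sum_distrib_left sum_subtractf)
  also have "\<dots> = Lam (g + 1) p - (g + 1) * Lam g p"
    by (simp add: Lam_def)
  finally show ?thesis .
qed

lemma Lam_X: "Lam g ([:0,1:] * p) = Lam (g + 1) p"
proof -
  have "pCons 0 p = [:0,1:] * p" by simp
  then show ?thesis using Lam_shift[of g p] by simp
qed

lemma Lam_X': "Lam (g - 1) ([:0,1:] * p) = Lam g p"
  using Lam_X[of "g - 1" p] by simp

lemma discr_le:
  fixes A B C :: real
  assumes "\<And>s t. 0 \<le> s * s * A + 2 * s * t * B + t * t * C" "A \<ge> 0" "C \<ge> 0"
  shows "B * B \<le> A * C"
proof (cases "C > 0")
  case True
  have "0 \<le> C * C * A + 2 * C * (-B) * B + (-B) * (-B) * C" using assms(1)[of C "-B"] .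
  then have "0 \<le> C * (A * C - B * B)" by (simp add: algebra_simps)
  then show ?thesis using True by (simp add: zero_le_mult_iff)
next
  case False
  then have C0: "C = 0" using assms(3) by simp
  show ?thesis
  proof (rule ccontr)
    assume "\<not> ?thesis"
    then have "B \<noteq> 0" using C0 by (cases "B = 0") auto
    then have Bp: "B * B > 0" using not_real_square_gt_zero by blast
    have "0 \<le> 1 * 1 * A + 2 * 1 * (-(A + 1) / (2 * B)) * B + 0" using assms(1)[of 1 "-(A+1)/(2*B)"] C0 by simp
    also have "\<dots> = -1" using \<open>B \<noteq> 0\<close> by (simp add: field_simps)
    finally show False by simp
  qed
qed

lemma hardy_alg:
  fixes b :: real and P :: "real poly"
  assumes b: "b > 0" and pos: "\<And>q. Lam (b - 1) (q * q) \<ge> 0"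
  shows "b\<^sup>2 * Lam (b - 1) (P * P) \<le> Lam (b + 1) ((2 * pderiv P - P) * (2 * pderiv P - P))"
proof -
  define Q where "Q = 2 * pderiv P - P"
  define A where "A = Lam (b - 1) (P * P)"
  define B where "B = Lam b (P * Q)"
  define C where "C = Lam (b + 1) (Q * Q)"
  have ibp: "Lam b (pderiv (P * P)) = Lam b (P * P) - b * A"
    using Lam_pderiv[of "b - 1" "P * P"] b by (simp add: A_def)
  have "pderiv (P * P) = P * pderiv P + P * pderiv P" by (simp add: pderiv_mult)
  then have "Lam b (pderiv (P * P)) = 2 * Lam b (P * pderiv P)" by (simp add: Lam_add)
  moreover have "B = 2 * Lam b (P * pderiv P) - Lam b (P * P)"
  proof -
    have "P * Q = 2 * (P * pderiv P) - P * P" by (simp add: Q_def algebra_simps)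
    then show ?thesis by (simp only: B_def Lam_diff Lam_numeral)
  qed
  ultimately have h1: "b * A = - B" using ibp by simp
  have A0: "A \<ge> 0" using pos[of P] by (simp add: A_def)
  have C0: "C \<ge> 0"
  proof -
    have "[:0,1:] * Q * ([:0,1:] * Q) = pCons 0 (pCons 0 (Q * Q))" by simp
    moreover have "Lam (b - 1) (pCons 0 (pCons 0 (Q * Q))) = C" by (simp add: Lam_shift C_def)
    ultimately show ?thesis using pos[of "[:0,1:] * Q"] by simp
  qed
  have quad: "0 \<le> s * s * A + 2 * s * t * B + t * t * C" for s t
  proof -
    have e: "(smult s P + smult t ([:0,1:] * Q)) * (smult s P + smult t ([:0,1:] * Q)) =
       smult (s * s) (P * P) + smult (s * t) ([:0,1:] * (P * Q)) + smult (s * t) ([:0,1:] * (P * Q)) + smult (t * t) ([:0,1:] * ([:0,1:] * (Q * Q)))"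
      by (simp add: algebra_simps)
    have "0 \<le> Lam (b - 1) ((smult s P + smult t ([:0,1:] * Q)) * (smult s P + smult t ([:0,1:] * Q)))"
      by (rule pos)
    also have "\<dots> = s * s * A + 2 * s * t * B + t * t * C"
      unfolding e by (simp only: Lam_add Lam_smult Lam_X' Lam_X A_def B_def C_def) (simp add: algebra_simps)
    finally show ?thesis .
  qed
  have "B * B \<le> A * C" by (rule discr_le[OF quad A0 C0])
  moreover have "B = -(b * A)" using h1 by simp
  then have "B * B = b\<^sup>2 * A * A" by (simp add: power2_eq_square algebra_simps)
  ultimately have "b\<^sup>2 * A * A \<le> A * C" by simp
  then have "b\<^sup>2 * A \<le> C"
  proof (cases "A > 0")
    case True
    then show ?thesis using \<open>b\<^sup>2 * A * A \<le> A * C\<close> by (simp add: algebra_simps mult_le_cancel_left_pos)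
  next
    case False
    then show ?thesis using A0 C0 by simp
  qed
  then show ?thesis by (simp add: A_def C_def Q_def)
qed

definition Mop :: "real \<Rightarrow> real poly \<Rightarrow> real poly" where
  "Mop b P = smult (-4) ([:0,1:] * pderiv (pderiv P)) + smult 4 ([:0,1:] * pderiv P)
     - smult (4 * (b + 1)) (pderiv P) + smult (2 * b + 2) P"

lemma energy_alg:
  fixes b :: real and P :: "real poly"
  assumes b: "b > -1"
  shows "Lam (b + 1) ((2 * pderiv P - P) * (2 * pderiv P - P)) + Lam (b + 1) (P * P)
       = Lam b (P * Mop b P)"
proof -
  let ?D = "pderiv P" and ?DD = "pderiv (pderiv P)"
  have ibp1: "Lam (b + 1) (?D * ?D) + Lam (b + 1) (P * ?DD) = Lam (b + 1) (P * ?D) - (b + 1) * Lam b (P * ?D)"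
  proof -
    have "pderiv (P * ?D) = ?D * ?D + P * ?DD" by (simp add: pderiv_mult)
    then show ?thesis using Lam_pderiv[OF b, of "P * ?D"] by (simp add: Lam_add)
  qed
  have ibp2: "2 * Lam (b + 1) (P * ?D) = Lam (b + 1) (P * P) - (b + 1) * Lam b (P * P)"
  proof -
    have "pderiv (P * P) = P * ?D + P * ?D" by (simp add: pderiv_mult)
    then show ?thesis using Lam_pderiv[OF b, of "P * P"] by (simp add: Lam_add)
  qed
  have l: "Lam (b + 1) ((2 * ?D - P) * (2 * ?D - P)) = 4 * Lam (b + 1) (?D * ?D) - 4 * Lam (b + 1) (P * ?D) + Lam (b + 1) (P * P)"
  proof -
    have "(2 * ?D - P) * (2 * ?D - P) = 4 * (?D * ?D) - 4 * (P * ?D) + P * P"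
      by (simp add: algebra_simps)
    then show ?thesis by (simp add: Lam_add Lam_diff)
  qed
  have r: "Lam b (P * Mop b P) = -4 * Lam (b + 1) (P * ?DD) + 4 * Lam (b + 1) (P * ?D) - 4 * (b + 1) * Lam b (P * ?D) + (2 * b + 2) * Lam b (P * P)"
  proof -
    have "P * Mop b P = smult (-4) ([:0,1:] * (P * ?DD)) + smult 4 ([:0,1:] * (P * ?D)) - smult (4 * (b + 1)) (P * ?D) + smult (2 * b + 2) (P * P)"
      by (simp add: Mop_def algebra_simps)
    then show ?thesis by (simp add: Lam_add Lam_diff Lam_smult Lam_X Lam_shift)
  qed
  show ?thesis using l r ibp1 ibp2 by (simp add: algebra_simps)
qed



definition lc :: "real \<Rightarrow> nat \<Rightarrow> nat \<Rightarrow> real" where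
  "lc b k i = (-1) ^ i * ((real k + b) gchoose (k - i)) / fact i"

definition lagp :: "real \<Rightarrow> nat \<Rightarrow> real poly" where
  "lagp b k = (\<Sum>i\<le>k. monom (lc b k i) i)"

lemma coeff_lagp: "coeff (lagp b k) i = (if i \<le> k then lc b k i else 0)"
  by (simp add: lagp_def coeff_sum coeff_monom)

lemma degree_lagp: "degree (lagp b k) \<le> k"
  unfolding lagp_def by (rule degree_sum_le) (auto intro: order_trans[OF degree_monom_le])

lemma poly_lagp: "poly (lagp b k) x = laguerre_poly b k x"
  by (simp add: lagp_def laguerre_poly_def poly_sum poly_monom lc_def)

lemma coeff_X_mult: "coeff ([:0,1:] * (p :: real poly)) i = (if i = 0 then 0 else coeff p (i - 1))"
proof -
  have "[:0,1:] * p = pCons 0 p" by simp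
  then show ?thesis by (simp add: coeff_pCons')
qed

lemma coeff_Mop: "coeff (Mop b P) i = (4 * real i + 2 * b + 2) * coeff P i - 4 * (real i + 1) * (real i + b + 1) * coeff P (Suc i)"
proof (cases i)
  case 0
  then show ?thesis by (simp add: Mop_def coeff_pderiv coeff_X_mult algebra_simps)
next
  case (Suc j)
  then show ?thesis by (simp add: Mop_def coeff_pderiv coeff_X_mult algebra_simps)
qed

lemma gbin_step: "(a - real m) * (a gchoose m) = real (Suc m) * (a gchoose Suc m)"
  using gbinomial_absorb_comp[of a m] gbinomial_absorption[of m a] by simp

lemma Mop_lagp: "Mop b (lagp b k) = smult (4 * real k + 2 * b + 2) (lagp b k)"
proof (rule poly_eqI)
  fix i
  have key: "(real i + 1) * (real i + b + 1) * coeff (lagp b k) (Suc i) = (real i - real k) * coeff (lagp b k) i"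
  proof (cases "i < k")
    case True
    define m where "m = k - Suc i"
    have km: "k - i = Suc m" using True by (simp add: m_def)
    have "k - Suc i = m" by (simp add: m_def)
    have am: "real k + b - real m = real i + b + 1" using True by (simp add: m_def of_nat_diff)
    have st: "(real i + b + 1) * ((real k + b) gchoose m) = real (Suc m) * ((real k + b) gchoose Suc m)"
      using gbin_step[of "real k + b" m] am by simp
    have "(real i + 1) * (real i + b + 1) * coeff (lagp b k) (Suc i)
        = (real i + 1) * (real i + b + 1) * ((-1) ^ Suc i * ((real k + b) gchoose m) / fact (Suc i))"
      using True by (simp add: coeff_lagp lc_def m_def)
    also have "\<dots> = - ((real i + b + 1) * ((real k + b) gchoose m)) * (-1) ^ i / fact i"
    proof -
      have F: "fact (Suc i) = (real i + 1) * (fact i :: real)" by simp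
      have Fp: "(fact i :: real) > 0" by simp
      have "(-1::real) ^ Suc i = - ((-1) ^ i)" by simp
      have aux: "(r + 1) * c * (- s * G / ((r + 1) * FF)) = - (c * G) * s / FF"
        if "r \<ge> 0" "FF > 0" for r c s G FF :: real
        using that by (simp add: divide_simps)
      show ?thesis unfolding F \<open>(-1::real) ^ Suc i = _\<close> by (rule aux) simp_all
    qed
    also have "\<dots> = - (real (Suc m) * ((real k + b) gchoose Suc m)) * (-1) ^ i / fact i"
      by (simp only: st)
    also have "\<dots> = (real i - real k) * coeff (lagp b k) i"
      using True by (simp add: coeff_lagp lc_def km m_def of_nat_diff field_simps)
    finally show ?thesis .
  next
    case False
    then show ?thesis by (cases "i = k") (auto simp: coeff_lagp)
  qed
  show "coeff (Mop b (lagp b k)) i = coeff (smult (4 * real k + 2 * b + 2) (lagp b k)) i"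
    unfolding coeff_Mop coeff_smult using key by (simp add: algebra_simps)
qed

lemma Gamma_shift_poch:
  assumes "z > (0::real)"
  shows "Gamma (z + real m) = Gamma z * pochhammer z m"
proof -
  have "z \<notin> \<int>\<^sub>\<le>\<^sub>0" using assms by (auto elim!: nonpos_Ints_cases)
  from pochhammer_Gamma[OF this, of m] show ?thesis
    using Gamma_real_pos[OF assms] by (simp add: field_simps)
qed

lemma Lam_monom_lagp:
  assumes b: "b > -1"
  shows "Lam b (monom 1 i * lagp b k) = Gamma (real i + b + 1) * ((real k - real i - 1) gchoose k)"
proof -
  define z where "z = real i + b + 1"
  have z: "z > 0" using b by (simp add: z_def)
  define f where "f j = coeff (monom 1 i * lagp b k) j * Gamma (real j + b + 1)" for j
  have dg: "degree (monom 1 i * lagp b k) \<le> i + k"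
    using degree_mult_le[of "monom (1::real) i" "lagp b k"] degree_lagp[of b k] degree_monom_le[of "1::real" i]
    by linarith
  have "Lam b (monom 1 i * lagp b k) = (\<Sum>j\<le>i + k. f j)"
    unfolding f_def by (rule Lam_bound[OF dg])
  also have "\<dots> = (\<Sum>j\<in>{0 + i..k + i}. f j)"
  proof (rule sum.mono_neutral_right)
    show "\<forall>j\<in>{..i + k} - {0 + i..k + i}. f j = 0"
      by (auto simp: f_def coeff_monom_mult)
  qed auto
  also have "\<dots> = (\<Sum>m\<in>{0..k}. f (m + i))"
    by (rule sum.shift_bounds_cl_nat_ivl)
  also have "\<dots> = (\<Sum>m\<in>{0..k}. ((-z) gchoose m) * ((real k + b) gchoose (k - m))) * Gamma z"
    unfolding sum_distrib_right
  proof (rule sum.cong)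
    fix m assume m: "m \<in> {0..k}"
    have c: "coeff (monom 1 i * lagp b k) (m + i) = lc b k m" using m by (simp add: coeff_monom_mult coeff_lagp)
    have eq: "real (m + i) + b + 1 = z + real m" by (simp add: z_def)
    have "f (m + i) = lc b k m * Gamma (z + real m)"
      unfolding f_def c eq by simp
    also have "\<dots> = lc b k m * Gamma z * pochhammer z m"
      by (simp add: Gamma_shift_poch[OF z])
    also have "\<dots> = ((-z) gchoose m) * ((real k + b) gchoose (k - m)) * Gamma z"
      by (simp add: gbinomial_pochhammer[of "-z"] lc_def mult_ac)
    finally show "f (m + i) = ((-z) gchoose m) * ((real k + b) gchoose (k - m)) * Gamma z" .
  qed simp
  also have "\<dots> = ((-z + (real k + b)) gchoose k) * Gamma z"
    using gbinomial_Vandermonde[of "-z" "real k + b" k] by (simp add: atLeast0AtMost)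
  also have "\<dots> = Gamma (real i + b + 1) * ((real k - real i - 1) gchoose k)"
    by (simp add: z_def algebra_simps)
  finally show ?thesis .
qed

lemma gchoose_small:
  assumes "i < k"
  shows "((real k - real i - 1) gchoose k) = 0"
proof -
  have e: "real k - real i - 1 = real (k - i - 1)" using assms by (simp add: of_nat_diff)
  show ?thesis unfolding e binomial_gbinomial[symmetric] using assms by simp
qed

lemma gchoose_minus1: "((-1::real) gchoose k) = (-1) ^ k"
  using gbinomial_minus[of "1::real" k] binomial_gbinomial[of k k, where 'a=real] by simp

lemma lagp_monoms: "lagp b m = (\<Sum>i\<le>m. smult (lc b m i) (monom 1 i))"
  by (simp add: lagp_def smult_monom)

lemma Lam_lagp_lagp_le:
  assumes b: "b > -1" and mk: "m \<le> k"
  shows "Lam b (lagp b m * lagp b k) = (if m = k then Gamma (real k + b + 1) / fact k else 0)"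
proof -
  have "Lam b (lagp b m * lagp b k) = (\<Sum>i\<le>m. lc b m i * (Gamma (real i + b + 1) * ((real k - real i - 1) gchoose k)))"
    unfolding lagp_monoms[of b m] sum_distrib_right
    by (simp add: Lam_sum Lam_smult Lam_monom_lagp[OF b])
  also have "\<dots> = (if m = k then Gamma (real k + b + 1) / fact k else 0)"
  proof (cases "m = k")
    case True
    have "(\<Sum>i\<le>m. lc b m i * (Gamma (real i + b + 1) * ((real k - real i - 1) gchoose k)))
        = (\<Sum>i\<in>{k}. lc b m i * (Gamma (real i + b + 1) * ((real k - real i - 1) gchoose k)))"
      by (rule sum.mono_neutral_right) (use True gchoose_small in auto)
    also have "\<dots> = Gamma (real k + b + 1) / fact k"
      using True by (simp add: lc_def gchoose_minus1 power_mult_distrib[symmetric])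
    finally show ?thesis using True by simp
  next
    case False
    then have "\<forall>i\<in>{..m}. i < k" using mk by auto
    then show ?thesis using False by (simp add: gchoose_small)
  qed
  finally show ?thesis .
qed

lemma Lam_lagp_lagp:
  assumes b: "b > -1"
  shows "Lam b (lagp b m * lagp b k) = (if m = k then Gamma (real k + b + 1) / fact k else 0)"
proof (cases "m \<le> k")
  case True then show ?thesis by (rule Lam_lagp_lagp_le[OF b])
next
  case False
  then show ?thesis using Lam_lagp_lagp_le[OF b, of k m] by (simp add: mult.commute)
qed

definition nc :: "real \<Rightarrow> nat \<Rightarrow> real" where
  "nc b k = sqrt (2 * Gamma (real k + 1) / Gamma (real k + b + 1))"

definition lsum :: "real \<Rightarrow> (nat \<Rightarrow> real) \<Rightarrow> nat set \<Rightarrow> real poly" where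
  "lsum b c K = (\<Sum>k\<in>K. smult (c k * nc b k) (lagp b k))"

lemma nc_norm:
  assumes b: "b > -1"
  shows "nc b k * nc b k * (Gamma (real k + b + 1) / fact k) = 2"
proof -
  have g1: "Gamma (real k + 1) = fact k" using Gamma_fact[of k] by (simp add: add.commute)
  have gp: "Gamma (real k + b + 1) > 0" using b by simp
  have "nc b k * nc b k = 2 * fact k / Gamma (real k + b + 1)"
    unfolding nc_def using gp by (simp add: g1 divide_nonneg_pos)
  then show ?thesis using gp by simp
qed

lemma Lam_lsum:
  assumes b: "b > -1" and K: "finite K"
  shows "Lam b (lsum b c K * lsum b d K) = 2 * (\<Sum>k\<in>K. c k * d k)"
proof -
  have "lsum b c K * lsum b d K = (\<Sum>k\<in>K. \<Sum>m\<in>K. smult (c k * nc b k * (d m * nc b m)) (lagp b k * lagp b m))"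
    unfolding lsum_def sum_product by (simp add: mult_smult_left mult_smult_right mult_ac)
  then have "Lam b (lsum b c K * lsum b d K) = (\<Sum>k\<in>K. \<Sum>m\<in>K. c k * nc b k * (d m * nc b m) * (if k = m then Gamma (real m + b + 1) / fact m else 0))"
    by (simp add: Lam_sum Lam_smult Lam_lagp_lagp[OF b])
  also have "\<dots> = (\<Sum>k\<in>K. c k * d k * (nc b k * nc b k * (Gamma (real k + b + 1) / fact k)))"
    by (rule sum.cong) (auto simp: K if_distrib[where f="\<lambda>x. _ * x"] cong: if_cong)
  also have "\<dots> = 2 * (\<Sum>k\<in>K. c k * d k)"
    unfolding nc_norm[OF b] by (simp add: sum_distrib_left mult.commute)
  finally show ?thesis .
qed

lemma Mop_add: "Mop b (p + q) = Mop b p + Mop b q"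
  by (simp add: Mop_def pderiv_add algebra_simps smult_add_right)

lemma Mop_smult: "Mop b (smult c p) = smult c (Mop b p)"
  by (simp add: Mop_def pderiv_smult algebra_simps smult_add_right smult_diff_right mult_smult_right)

lemma Mop_0: "Mop b 0 = 0" by (simp add: Mop_def)

lemma Mop_sum: "Mop b (\<Sum>k\<in>K. f k) = (\<Sum>k\<in>K. Mop b (f k))"
  by (induction K rule: infinite_finite_induct) (auto simp: Mop_add Mop_0)

lemma Mop_lsum: "Mop b (lsum b c K) = lsum b (\<lambda>k. (4 * real k + 2 * b + 2) * c k) K"
  unfolding lsum_def Mop_sum Mop_smult Mop_lagp by (simp add: mult_ac)

lemma hardy_lsum:
  assumes b: "b > 0" and pos: "\<And>q. Lam (b - 1) (q * q) \<ge> 0" and K: "finite K"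
  shows "b\<^sup>2 * Lam (b - 1) (lsum b c K * lsum b c K) \<le> 2 * (\<Sum>k\<in>K. (4 * real k + 2 * b + 2) * (c k)\<^sup>2)"
proof -
  let ?P = "lsum b c K"
  have "b\<^sup>2 * Lam (b - 1) (?P * ?P) \<le> Lam (b + 1) ((2 * pderiv ?P - ?P) * (2 * pderiv ?P - ?P))"
    by (rule hardy_alg[OF b pos])
  also have "\<dots> \<le> Lam (b + 1) ((2 * pderiv ?P - ?P) * (2 * pderiv ?P - ?P)) + Lam (b + 1) (?P * ?P)"
  proof -
    have "[:0,1:] * ?P * ([:0,1:] * ?P) = pCons 0 (pCons 0 (?P * ?P))" by simp
    moreover have "Lam (b - 1) (pCons 0 (pCons 0 (?P * ?P))) = Lam (b + 1) (?P * ?P)" by (simp add: Lam_shift)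
    ultimately show ?thesis using pos[of "[:0,1:] * ?P"] by simp
  qed
  also have "\<dots> = Lam b (?P * Mop b ?P)"
    by (rule energy_alg) (use b in simp)
  also have "\<dots> = 2 * (\<Sum>k\<in>K. (4 * real k + 2 * b + 2) * (c k)\<^sup>2)"
    unfolding Mop_lsum using b K by (simp add: Lam_lsum power2_eq_square mult_ac)
  finally show ?thesis .
qed



lemma gamma_moment:
  fixes s :: real assumes s: "s > -1"
  shows "has_bochner_integral lborel (\<lambda>x. indicator {0<..} x * x powr (2 * s + 1) * exp (-(x\<^sup>2))) (Gamma (s+1) / 2)"
proof (rule has_bochner_integral_nn_integral)
  have e: "indicator {0<..} x * x powr (2 * s + 1) * exp (-(x\<^sup>2)) = indicator {0..} x * x powr (2 * s + 1) * exp (-(x\<^sup>2))" for x :: real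
    by (auto simp: indicator_def)
  show "(\<integral>\<^sup>+x. ennreal (indicator {0<..} x * x powr (2 * s + 1) * exp (-(x\<^sup>2))) \<partial>lborel) = ennreal (Gamma (s+1) / 2)"
    by (simp only: e) (rule gamma_moment_nn[OF s])
  show "0 \<le> Gamma (s + 1) / 2" using s by (simp add: less_imp_le)
qed auto

lemma poly_moment:
  fixes g :: real assumes g: "g > -1"
  shows "has_bochner_integral lborel (\<lambda>x. indicator {0<..} x * (poly p (x\<^sup>2) * exp (-(x\<^sup>2)) * x powr (2 * g + 1))) (Lam g p / 2)"
proof -
  have e: "(\<lambda>x. indicator {0<..} x * (poly p (x\<^sup>2) * exp (-(x\<^sup>2)) * x powr (2 * g + 1))) =
     (\<lambda>x. \<Sum>i\<le>degree p. coeff p i * (indicator {0<..} x * x powr (2 * (real i + g) + 1) * exp (-(x\<^sup>2))))"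
  proof (rule ext)
    fix x :: real
    show "indicator {0<..} x * (poly p (x\<^sup>2) * exp (-(x\<^sup>2)) * x powr (2 * g + 1)) =
      (\<Sum>i\<le>degree p. coeff p i * (indicator {0<..} x * x powr (2 * (real i + g) + 1) * exp (-(x\<^sup>2))))"
    proof (cases "x > 0")
      case True
      have pw: "(x\<^sup>2) ^ i * x powr (2 * g + 1) = x powr (2 * (real i + g) + 1)" for i
      proof -
        have "(x\<^sup>2) ^ i = x powr (real (2 * i))" using powr_realpow[OF True, of "2 * i"] by (simp add: power_mult)
        then show ?thesis using True by (simp add: powr_add[symmetric] algebra_simps)
      qed
      have "poly p (x\<^sup>2) * exp (-(x\<^sup>2)) * x powr (2 * g + 1) = (\<Sum>i\<le>degree p. coeff p i * ((x\<^sup>2) ^ i * x powr (2 * g + 1)) * exp (-(x\<^sup>2)))"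
        by (simp add: poly_altdef sum_distrib_left sum_distrib_right mult_ac)
      also have "\<dots> = (\<Sum>i\<le>degree p. coeff p i * (x powr (2 * (real i + g) + 1) * exp (-(x\<^sup>2))))"
        by (simp only: pw mult.assoc)
      finally show ?thesis using True by simp
    next
      case False then show ?thesis by simp
    qed
  qed
  have H: "has_bochner_integral lborel (\<lambda>x. \<Sum>i\<le>degree p. coeff p i * (indicator {0<..} x * x powr (2 * (real i + g) + 1) * exp (-(x\<^sup>2))))
     (\<Sum>i\<le>degree p. coeff p i * (Gamma (real i + g + 1) / 2))"
  proof (rule has_bochner_integral_sum, rule has_bochner_integral_mult_right)
    fix i assume "i \<in> {..degree p}"
    have "real i + g > -1" using g by simp
    from gamma_moment[OF this] show "has_bochner_integral lborel (\<lambda>x. indicator {0<..} x * x powr (2 * (real i + g) + 1) * exp (-(x\<^sup>2))) (Gamma (real i + g + 1) / 2)"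
      by (simp add: add.assoc)
  qed
  have L: "(\<Sum>i\<le>degree p. coeff p i * (Gamma (real i + g + 1) / 2)) = Lam g p / 2"
    by (simp add: Lam_def sum_divide_distrib)
  show ?thesis unfolding e using H unfolding L .
qed

lemma Lam_sq_nonneg:
  assumes g: "g > -1"
  shows "Lam g (q * q) \<ge> 0"
proof -
  have I: "integral\<^sup>L lborel (\<lambda>x. indicator {0<..} x * (poly (q * q) (x\<^sup>2) * exp (-(x\<^sup>2)) * x powr (2 * g + 1))) = Lam g (q * q) / 2"
    by (rule has_bochner_integral_integral_eq[OF poly_moment[OF g]])
  have N: "integral\<^sup>L lborel (\<lambda>x. indicator {0<..} x * (poly (q * q) (x\<^sup>2) * exp (-(x\<^sup>2)) * x powr (2 * g + 1))) \<ge> 0"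
    by (rule integral_nonneg_AE) (auto simp: indicator_def)
  show ?thesis using I N by linarith
qed

definition Sfun :: "real \<Rightarrow> (nat \<Rightarrow> complex) \<Rightarrow> nat set \<Rightarrow> real \<Rightarrow> complex" where
  "Sfun b c K x = (\<Sum>k\<in>K. c k * complex_of_real (laguerre_fun b k x))"

lemma laguerre_fun_poly: "laguerre_fun b k x = nc b k * poly (lagp b k) (x\<^sup>2) * exp (- (x\<^sup>2) / 2)"
  by (simp add: laguerre_fun_def nc_def poly_lagp)

lemma polysq_meas[measurable]: "(\<lambda>x::real. poly p (x\<^sup>2)) \<in> borel_measurable borel"
  by (intro borel_measurable_continuous_onI continuous_intros)

lemma expsq_meas[measurable]: "(\<lambda>x::real. exp (- (x\<^sup>2) / 2)) \<in> borel_measurable borel"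
  by (intro borel_measurable_continuous_onI continuous_intros) auto

lemma expsq_meas'[measurable]: "(\<lambda>x::real. exp (- (x\<^sup>2))) \<in> borel_measurable borel"
  by (intro borel_measurable_continuous_onI continuous_intros)

lemma laguerre_fun_meas[measurable]: "(\<lambda>x. laguerre_fun b k x) \<in> borel_measurable borel"
  unfolding laguerre_fun_poly by measurable

lemma Sfun_meas[measurable]: "Sfun b c K \<in> borel_measurable borel"
  unfolding Sfun_def by measurable

lemma poly_lsum: "poly (lsum b c K) y = (\<Sum>k\<in>K. c k * nc b k * poly (lagp b k) y)"
  by (simp add: lsum_def poly_sum)

lemma Sfun_Re: "Re (Sfun b c K x) = poly (lsum b (\<lambda>k. Re (c k)) K) (x\<^sup>2) * exp (- (x\<^sup>2) / 2)"
  by (simp add: Sfun_def Re_sum poly_lsum laguerre_fun_poly sum_distrib_left mult_ac)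

lemma Sfun_Im: "Im (Sfun b c K x) = poly (lsum b (\<lambda>k. Im (c k)) K) (x\<^sup>2) * exp (- (x\<^sup>2) / 2)"
  by (simp add: Sfun_def Im_sum poly_lsum laguerre_fun_poly sum_distrib_left mult_ac)

lemma Sfun_sq: "(cmod (Sfun b c K x))\<^sup>2 =
   poly (lsum b (\<lambda>k. Re (c k)) K * lsum b (\<lambda>k. Re (c k)) K + lsum b (\<lambda>k. Im (c k)) K * lsum b (\<lambda>k. Im (c k)) K) (x\<^sup>2) * exp (-(x\<^sup>2))"
proof -
  have E: "(exp (- (x\<^sup>2) / 2))\<^sup>2 = exp (-(x\<^sup>2))"
    by (simp add: power2_eq_square exp_add[symmetric])
  show ?thesis unfolding cmod_power2 Sfun_Re Sfun_Im power_mult_distrib E poly_add poly_mult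
    by (simp add: power2_eq_square algebra_simps)
qed

lemma nn_mu: "f \<in> borel_measurable borel \<Longrightarrow>
   (\<integral>\<^sup>+x. f x \<partial>mu b) = (\<integral>\<^sup>+x. ennreal (indicator {0<..} x * x powr (2 * b + 1)) * f x \<partial>lborel)"
  unfolding mu_def by (subst nn_integral_density) auto

lemma Sfun_norm:
  assumes b: "b > -1" and K: "finite K"
  shows "(\<integral>\<^sup>+x. ennreal ((cmod (Sfun b c K x))\<^sup>2) \<partial>mu b) = ennreal (\<Sum>k\<in>K. (cmod (c k))\<^sup>2)"
proof -
  define R where "R = lsum b (\<lambda>k. Re (c k)) K * lsum b (\<lambda>k. Re (c k)) K + lsum b (\<lambda>k. Im (c k)) K * lsum b (\<lambda>k. Im (c k)) K"
  have "(\<integral>\<^sup>+x. ennreal ((cmod (Sfun b c K x))\<^sup>2) \<partial>mu b) =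
     (\<integral>\<^sup>+x. ennreal (indicator {0<..} x * (poly R (x\<^sup>2) * exp (-(x\<^sup>2)) * x powr (2 * b + 1))) \<partial>lborel)"
    by (subst nn_mu) (auto simp: Sfun_sq R_def ennreal_mult'[symmetric] mult_ac intro!: nn_integral_cong)
  also have "\<dots> = ennreal (Lam b R / 2)"
  proof -
    have hb: "has_bochner_integral lborel (\<lambda>x. indicator {0<..} x * (poly R (x\<^sup>2) * exp (-(x\<^sup>2)) * x powr (2 * b + 1))) (Lam b R / 2)"
      by (rule poly_moment[OF b])
    have nn: "\<forall>x. 0 \<le> indicator {0<..} x * (poly R (x\<^sup>2) * exp (-(x\<^sup>2)) * x powr (2 * b + 1))"
      by (auto simp: R_def indicator_def)
    have "0 \<le> Lam b R" unfolding R_def Lam_add using Lam_sq_nonneg[OF b] by (simp add: add_nonneg_nonneg)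
    then show ?thesis using hb nn
      by (subst nn_integral_eq_integrable) (auto simp: has_bochner_integral_iff)
  qed
  also have "Lam b R / 2 = (\<Sum>k\<in>K. (cmod (c k))\<^sup>2)"
    unfolding R_def Lam_add Lam_lsum[OF b K] by (simp add: cmod_power2 sum.distrib power2_eq_square[symmetric])
  finally show ?thesis .
qed

lemma Sfun_weighted:
  assumes b: "b > 0" and K: "finite K"
  shows "(\<integral>\<^sup>+x. ennreal ((cmod (Sfun b c K x))\<^sup>2 / x\<^sup>2) \<partial>mu b)
     \<le> ennreal ((\<Sum>k\<in>K. (4 * real k + 2 * b + 2) * (cmod (c k))\<^sup>2) / b\<^sup>2)"
proof -
  define P where "P = lsum b (\<lambda>k. Re (c k)) K"
  define Q where "Q = lsum b (\<lambda>k. Im (c k)) K"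
  define R where "R = P * P + Q * Q"
  have b1: "b - 1 > -1" using b by simp
  have pw: "x powr (2 * b + 1) / x\<^sup>2 = x powr (2 * (b - 1) + 1)" if "x > 0" for x :: real
  proof -
    have "x powr (2 * b + 1) = x powr ((2 * (b - 1) + 1) + 2)" by (simp add: algebra_simps)
    also have "\<dots> = x powr (2 * (b - 1) + 1) * x powr 2" by (rule powr_add)
    finally have "x powr (2 * b + 1) = x powr (2 * (b - 1) + 1) * x powr 2" .
    then show ?thesis using that by simp
  qed
  have "(\<integral>\<^sup>+x. ennreal ((cmod (Sfun b c K x))\<^sup>2 / x\<^sup>2) \<partial>mu b) =
     (\<integral>\<^sup>+x. ennreal (indicator {0<..} x * (poly R (x\<^sup>2) * exp (-(x\<^sup>2)) * x powr (2 * (b - 1) + 1))) \<partial>lborel)"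
  proof (subst nn_mu, simp, rule nn_integral_cong)
    fix x :: real
    show "ennreal (indicator {0<..} x * x powr (2 * b + 1)) * ennreal ((cmod (Sfun b c K x))\<^sup>2 / x\<^sup>2) =
      ennreal (indicator {0<..} x * (poly R (x\<^sup>2) * exp (-(x\<^sup>2)) * x powr (2 * (b - 1) + 1)))"
    proof (cases "x > 0")
      case True
      have "indicator {0<..} x * x powr (2 * b + 1) * ((cmod (Sfun b c K x))\<^sup>2 / x\<^sup>2) =
           indicator {0<..} x * (poly R (x\<^sup>2) * exp (-(x\<^sup>2)) * (x powr (2 * b + 1) / x\<^sup>2))"
        by (simp add: Sfun_sq R_def P_def Q_def)
      also have "\<dots> = indicator {0<..} x * (poly R (x\<^sup>2) * exp (-(x\<^sup>2)) * x powr (2 * (b - 1) + 1))"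
        by (simp only: pw[OF True])
      finally show ?thesis using True by (simp add: ennreal_mult'[symmetric])
    next
      case False then show ?thesis by simp
    qed
  qed
  also have "\<dots> = ennreal (Lam (b - 1) R / 2)"
  proof -
    have hb: "has_bochner_integral lborel (\<lambda>x. indicator {0<..} x * (poly R (x\<^sup>2) * exp (-(x\<^sup>2)) * x powr (2 * (b - 1) + 1))) (Lam (b - 1) R / 2)"
      by (rule poly_moment[OF b1])
    have nn: "\<forall>x. 0 \<le> indicator {0<..} x * (poly R (x\<^sup>2) * exp (-(x\<^sup>2)) * x powr (2 * (b - 1) + 1))"
      by (auto simp: R_def indicator_def)
    have "0 \<le> Lam (b - 1) R" unfolding R_def Lam_add using Lam_sq_nonneg[OF b1] by (simp add: add_nonneg_nonneg)
    then show ?thesis using hb nn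
      by (subst nn_integral_eq_integrable) (auto simp: has_bochner_integral_iff)
  qed
  also have "\<dots> \<le> ennreal ((\<Sum>k\<in>K. (4 * real k + 2 * b + 2) * (cmod (c k))\<^sup>2) / b\<^sup>2)"
  proof (rule ennreal_leI)
    have pos: "\<And>q. Lam (b - 1) (q * q) \<ge> 0" by (rule Lam_sq_nonneg[OF b1])
    have hP: "b\<^sup>2 * Lam (b - 1) (P * P) \<le> 2 * (\<Sum>k\<in>K. (4 * real k + 2 * b + 2) * (Re (c k))\<^sup>2)"
      unfolding P_def by (rule hardy_lsum[OF b pos K])
    have hQ: "b\<^sup>2 * Lam (b - 1) (Q * Q) \<le> 2 * (\<Sum>k\<in>K. (4 * real k + 2 * b + 2) * (Im (c k))\<^sup>2)"
      unfolding Q_def by (rule hardy_lsum[OF b pos K])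
    have "b\<^sup>2 * (Lam (b - 1) R / 2) \<le> (\<Sum>k\<in>K. (4 * real k + 2 * b + 2) * (cmod (c k))\<^sup>2)"
      using hP hQ unfolding R_def Lam_add by (simp add: cmod_power2 algebra_simps sum.distrib)
    then show "Lam (b - 1) R / 2 \<le> (\<Sum>k\<in>K. (4 * real k + 2 * b + 2) * (cmod (c k))\<^sup>2) / b\<^sup>2"
      using b by (simp add: field_simps)
  qed
  finally show ?thesis .
qed



lemma space_mu[simp]: "space (mu b) = UNIV" by (simp add: mu_def)
lemma sets_mu[simp]: "sets (mu b) = sets borel" by (simp add: mu_def)
lemma meas_mu_iff[simp]: "measurable (mu b) N = measurable borel N"
  by (rule measurable_cong_sets) auto

lemma L2_meas: "g \<in> L2 M \<Longrightarrow> g \<in> borel_measurable M" by (simp add: L2_def)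

lemma L2_integrable:
  assumes "g \<in> L2 M"
  shows "integrable M (\<lambda>x. (cmod (g x))\<^sup>2)"
proof -
  have [measurable]: "g \<in> borel_measurable M" using assms by (simp add: L2_def)
  have "(\<integral>\<^sup>+x. ennreal (norm ((cmod (g x))\<^sup>2)) \<partial>M) < \<infinity>" using assms by (simp add: L2_def)
  then show ?thesis by (subst integrable_iff_bounded) auto
qed

lemma L2_nn_eq:
  assumes "g \<in> L2 M"
  shows "(\<integral>\<^sup>+x. ennreal ((cmod (g x))\<^sup>2) \<partial>M) = ennreal (\<integral>x. (cmod (g x))\<^sup>2 \<partial>M)"
  by (rule nn_integral_eq_integral[OF L2_integrable[OF assms]]) auto

lemma Sfun_integrable:
  assumes b: "b > -1" and K: "finite K"
  shows "integrable (mu b) (\<lambda>x. (cmod (Sfun b c K x))\<^sup>2)"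
    and "(\<integral>x. (cmod (Sfun b c K x))\<^sup>2 \<partial>mu b) = (\<Sum>k\<in>K. (cmod (c k))\<^sup>2)"
  using Sfun_norm[OF b K, of c]
  by (subst (asm) nn_integral_eq_integrable; auto simp: sum_nonneg)+

lemma Sfun_single: "Sfun b (\<lambda>_. 1) {k} x = complex_of_real (laguerre_fun b k x)"
  by (simp add: Sfun_def)

lemma lag_sq_integrable:
  assumes b: "b > -1"
  shows "integrable (mu b) (\<lambda>x. (laguerre_fun b k x)\<^sup>2)"
  using Sfun_integrable(1)[OF b, of "{k}" "\<lambda>_. 1"] by (simp add: Sfun_single)

lemma g_lag_integrable:
  assumes b: "b > -1" and g: "g \<in> L2 (mu b)"
  shows "integrable (mu b) (\<lambda>x. g x * complex_of_real (laguerre_fun b k x))"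
proof (rule Bochner_Integration.integrable_bound[where f="\<lambda>x. (cmod (g x))\<^sup>2 + (laguerre_fun b k x)\<^sup>2"])
  show "integrable (mu b) (\<lambda>x. (cmod (g x))\<^sup>2 + (laguerre_fun b k x)\<^sup>2)"
    using L2_integrable[OF g] lag_sq_integrable[OF b] by auto
  have [measurable]: "g \<in> borel_measurable borel" using L2_meas[OF g] by simp
  show "(\<lambda>x. g x * complex_of_real (laguerre_fun b k x)) \<in> borel_measurable (mu b)" by simp
  show "AE x in mu b. norm (g x * complex_of_real (laguerre_fun b k x)) \<le> norm ((cmod (g x))\<^sup>2 + (laguerre_fun b k x)\<^sup>2)"
  proof (rule AE_I2)
    fix x
    have "cmod (g x) * \<bar>laguerre_fun b k x\<bar> \<le> (cmod (g x))\<^sup>2 + (laguerre_fun b k x)\<^sup>2"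
    proof -
      have "2 * cmod (g x) * \<bar>laguerre_fun b k x\<bar> \<le> (cmod (g x))\<^sup>2 + \<bar>laguerre_fun b k x\<bar>\<^sup>2"
        by (rule sum_squares_bound)
      moreover have "0 \<le> cmod (g x) * \<bar>laguerre_fun b k x\<bar>" by simp
      moreover have "\<bar>laguerre_fun b k x\<bar>\<^sup>2 = (laguerre_fun b k x)\<^sup>2" by simp
      ultimately show ?thesis by linarith
    qed
    then show "norm (g x * complex_of_real (laguerre_fun b k x)) \<le> norm ((cmod (g x))\<^sup>2 + (laguerre_fun b k x)\<^sup>2)"
      by (simp add: norm_mult)
  qed
qed

lemma bessel:
  assumes b: "b > -1" and g: "g \<in> L2 (mu b)" and K: "finite K"
  shows "(\<Sum>k\<in>K. (cmod (lag_coeff b g k))\<^sup>2) \<le> (\<integral>x. (cmod (g x))\<^sup>2 \<partial>mu b)"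
proof -
  define c where "c = lag_coeff b g"
  define S where "S = Sfun b c K"
  have [measurable]: "g \<in> borel_measurable borel" using L2_meas[OF g] by simp
  have ic: "integrable (mu b) (\<lambda>x. g x * complex_of_real (laguerre_fun b k x))" for k
    by (rule g_lag_integrable[OF b g])
  have cdef: "c k = (\<integral>x. g x * complex_of_real (laguerre_fun b k x) \<partial>mu b)" for k
    by (simp add: c_def lag_coeff_def)
  have gS: "(\<lambda>x. g x * cnj (S x)) = (\<lambda>x. \<Sum>k\<in>K. cnj (c k) * (g x * complex_of_real (laguerre_fun b k x)))"
    by (rule ext) (simp add: S_def Sfun_def sum_distrib_left mult_ac)
  have igS: "integrable (mu b) (\<lambda>x. g x * cnj (S x))"
    unfolding gS using ic by auto
  have IgS: "(\<integral>x. g x * cnj (S x) \<partial>mu b) = (\<Sum>k\<in>K. cnj (c k) * c k)"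
    unfolding gS using ic by (simp add: cdef)
  have ReIgS: "(\<integral>x. Re (g x * cnj (S x)) \<partial>mu b) = (\<Sum>k\<in>K. (cmod (c k))\<^sup>2)"
  proof -
    have "(\<integral>x. Re (g x * cnj (S x)) \<partial>mu b) = Re (\<integral>x. g x * cnj (S x) \<partial>mu b)"
      by (rule integral_Re[OF igS])
    also have "\<dots> = (\<Sum>k\<in>K. (cmod (c k))\<^sup>2)"
      unfolding IgS by (simp add: Re_sum cmod_power2 power2_eq_square[symmetric])
    finally show ?thesis .
  qed
  have iS: "integrable (mu b) (\<lambda>x. (cmod (S x))\<^sup>2)" and IS: "(\<integral>x. (cmod (S x))\<^sup>2 \<partial>mu b) = (\<Sum>k\<in>K. (cmod (c k))\<^sup>2)"
    unfolding S_def using Sfun_integrable[OF b K] by auto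
  have pt: "(cmod (g x - S x))\<^sup>2 = (cmod (g x))\<^sup>2 - 2 * Re (g x * cnj (S x)) + (cmod (S x))\<^sup>2" for x
    unfolding cmod_power2 by (simp add: power2_eq_square algebra_simps)
  have "0 \<le> (\<integral>x. (cmod (g x - S x))\<^sup>2 \<partial>mu b)" by simp
  also have "\<dots> = (\<integral>x. (cmod (g x))\<^sup>2 - 2 * Re (g x * cnj (S x)) + (cmod (S x))\<^sup>2 \<partial>mu b)"
    by (simp only: pt)
  also have "\<dots> = (\<integral>x. (cmod (g x))\<^sup>2 \<partial>mu b) - 2 * (\<integral>x. Re (g x * cnj (S x)) \<partial>mu b) + (\<integral>x. (cmod (S x))\<^sup>2 \<partial>mu b)"
  proof (rule has_bochner_integral_integral_eq)
    have iR: "integrable (mu b) (\<lambda>x. Re (g x * cnj (S x)))" using igS by (rule integrable_Re)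
    show "has_bochner_integral (mu b) (\<lambda>x. (cmod (g x))\<^sup>2 - 2 * Re (g x * cnj (S x)) + (cmod (S x))\<^sup>2)
      ((\<integral>x. (cmod (g x))\<^sup>2 \<partial>mu b) - 2 * (\<integral>x. Re (g x * cnj (S x)) \<partial>mu b) + (\<integral>x. (cmod (S x))\<^sup>2 \<partial>mu b))"
      by (intro has_bochner_integral_add has_bochner_integral_diff has_bochner_integral_mult_right
          has_bochner_integral_integrable L2_integrable[OF g] iR iS)
  qed
  finally show ?thesis using ReIgS IS by (simp add: c_def)
qed



definition wco :: "real \<Rightarrow> (real \<Rightarrow> complex) \<Rightarrow> nat \<Rightarrow> complex" where
  "wco b g k = complex_of_real ((4 * real k + 2 * b + 2) powr (-1/2)) * lag_coeff b g k"

lemma Linv_partial_Sfun: "Linv_partial b g n = Sfun b (wco b g) {..<n}"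
  by (rule ext) (simp add: Linv_partial_def Sfun_def wco_def)

lemma w_sq:
  assumes b: "b > -1"
  shows "(4 * real k + 2 * b + 2) * (cmod (wco b g k))\<^sup>2 = (cmod (lag_coeff b g k))\<^sup>2"
proof -
  define l where "l = 4 * real k + 2 * b + 2"
  have l: "l > 0" using b by (simp add: l_def)
  have "(l powr (-1/2))\<^sup>2 = l powr (-1/2) * l powr (-1/2)"
    by (simp add: power2_eq_square)
  also have "\<dots> = l powr (-1/2 + -1/2)" by (rule powr_add[symmetric])
  also have "\<dots> = l powr (- 1)" by simp
  also have "\<dots> = inverse l" using l by (simp add: powr_minus)
  finally have r: "(l powr (-1/2))\<^sup>2 = inverse l" .
  have "(cmod (wco b g k))\<^sup>2 = (l powr (-1/2))\<^sup>2 * (cmod (lag_coeff b g k))\<^sup>2"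
    by (simp add: wco_def l_def norm_mult power_mult_distrib)
  then show ?thesis using l unfolding l_def[symmetric] r by simp
qed

lemma w_summable:
  assumes b: "b > -1" and g: "g \<in> L2 (mu b)"
  shows "summable (\<lambda>k. (cmod (wco b g k))\<^sup>2)"
proof (rule summableI_nonneg_bounded)
  fix n
  have le: "(cmod (wco b g k))\<^sup>2 \<le> (cmod (lag_coeff b g k))\<^sup>2 / (2 * b + 2)" for k
  proof -
    have "(2 * b + 2) * (cmod (wco b g k))\<^sup>2 \<le> (4 * real k + 2 * b + 2) * (cmod (wco b g k))\<^sup>2"
      by (rule mult_right_mono) auto
    then have "(2 * b + 2) * (cmod (wco b g k))\<^sup>2 \<le> (cmod (lag_coeff b g k))\<^sup>2"
      using w_sq[OF b, of k g] by simp
    then show ?thesis using b by (simp add: pos_le_divide_eq mult.commute)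
  qed
  have "(\<Sum>k<n. (cmod (wco b g k))\<^sup>2) \<le> (\<Sum>k<n. (cmod (lag_coeff b g k))\<^sup>2 / (2 * b + 2))"
    by (rule sum_mono) (rule le)
  also have "\<dots> = (\<Sum>k<n. (cmod (lag_coeff b g k))\<^sup>2) / (2 * b + 2)"
    by (simp add: sum_divide_distrib)
  also have "\<dots> \<le> (\<integral>x. (cmod (g x))\<^sup>2 \<partial>mu b) / (2 * b + 2)"
    using bessel[OF b g, of "{..<n}"] b by (simp add: divide_right_mono)
  finally show "(\<Sum>k<n. (cmod (wco b g k))\<^sup>2) \<le> (\<integral>x. (cmod (g x))\<^sup>2 \<partial>mu b) / (2 * b + 2)" .
qed simp

lemma Sfun_split:
  assumes "m \<le> n"
  shows "Sfun b c {..<n} x - Sfun b c {..<m} x = Sfun b c {m..<n} x"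
proof -
  have e: "{..<n} = {..<m} \<union> {m..<n}" using assms by auto
  have "Sfun b c {..<n} x = Sfun b c {..<m} x + Sfun b c {m..<n} x"
    unfolding Sfun_def e by (rule sum.union_disjoint) auto
  then show ?thesis by simp
qed

lemma seg_le_tail:
  fixes f :: "nat \<Rightarrow> real"
  assumes s: "summable f" and nn: "\<And>k. f k \<ge> 0" and mn: "m \<le> n"
  shows "(\<Sum>k\<in>{m..<n}. f k) \<le> (\<Sum>i. f (i + m))"
proof -
  have "(\<Sum>k\<in>{m..<n}. f k) = (\<Sum>i\<in>{0..<n - m}. f (i + m))"
    using sum.shift_bounds_nat_ivl[of f 0 m "n - m"] mn by simp
  also have "\<dots> \<le> (\<Sum>i. f (i + m))"
    by (rule sum_le_suminf) (use s nn summable_ignore_initial_segment in auto)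
  finally show ?thesis .
qed

lemma diff_norm:
  assumes b: "b > -1" and g: "g \<in> L2 (mu b)" and mn: "m \<le> n"
  shows "(\<integral>\<^sup>+x. ennreal ((cmod (Sfun b (wco b g) {..<n} x - Sfun b (wco b g) {..<m} x))\<^sup>2) \<partial>mu b)
      \<le> ennreal (\<Sum>i. (cmod (wco b g (i + m)))\<^sup>2)"
proof -
  have "(\<integral>\<^sup>+x. ennreal ((cmod (Sfun b (wco b g) {..<n} x - Sfun b (wco b g) {..<m} x))\<^sup>2) \<partial>mu b)
     = ennreal (\<Sum>k\<in>{m..<n}. (cmod (wco b g k))\<^sup>2)"
    unfolding Sfun_split[OF mn] by (rule Sfun_norm[OF b]) simp
  also have "\<dots> \<le> ennreal (\<Sum>i. (cmod (wco b g (i + m)))\<^sup>2)"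
    by (rule ennreal_leI, rule seg_le_tail[OF w_summable[OF b g] _ mn]) simp
  finally show ?thesis .
qed



lemma L2_cauchy_limit:
  fixes F :: "nat \<Rightarrow> 'a \<Rightarrow> complex" and T :: "nat \<Rightarrow> real"
  assumes meas[measurable]: "\<And>n. F n \<in> borel_measurable M"
    and T0: "T \<longlonglongrightarrow> 0"
    and bound: "\<And>m n. m \<le> n \<Longrightarrow> (\<integral>\<^sup>+x. ennreal ((cmod (F n x - F m x))\<^sup>2) \<partial>M) \<le> ennreal (T m)"
  shows "\<exists>h. h \<in> borel_measurable M \<and> (\<lambda>n. \<integral>\<^sup>+x. ennreal ((cmod (F n x - h x))\<^sup>2) \<partial>M) \<longlonglongrightarrow> 0"
proof -
  have "\<forall>i. \<exists>N. \<forall>n\<ge>N. T n < (1/8) ^ i"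
  proof
    fix i :: nat
    have "(1/8::real) ^ i > 0" by simp
    from order_tendstoD(2)[OF T0 this] show "\<exists>N. \<forall>n\<ge>N. T n < (1/8) ^ i"
      by (simp add: eventually_sequentially)
  qed
  then obtain N where N: "\<And>i n. n \<ge> N i \<Longrightarrow> T n < (1/8) ^ i" by metis
  define nn where "nn i = i + (\<Sum>j\<le>i. N j)" for i
  have nn_ge: "nn i \<ge> i" "nn i \<ge> N i" for i
    unfolding nn_def using member_le_sum[of i "{..i}" N] by auto
  have nn_mono: "nn i \<le> nn (Suc i)" for i
    unfolding nn_def by simp
  define D where "D i x = F (nn (Suc i)) x - F (nn i) x" for i x
  have [measurable]: "D i \<in> borel_measurable M" for i unfolding D_def by measurable
  have Dnorm: "(\<integral>\<^sup>+x. ennreal ((cmod (D i x))\<^sup>2) \<partial>M) \<le> ennreal ((1/8) ^ i)" for i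
  proof -
    have "(\<integral>\<^sup>+x. ennreal ((cmod (D i x))\<^sup>2) \<partial>M) \<le> ennreal (T (nn i))"
      unfolding D_def by (rule bound[OF nn_mono])
    also have "\<dots> \<le> ennreal ((1/8) ^ i)"
      using N[OF nn_ge(2)[of i]] by (intro ennreal_leI) simp
    finally show ?thesis .
  qed
  define W where "W x = (\<Sum>i. ennreal (4 ^ i * (cmod (D i x))\<^sup>2))" for x
  have [measurable]: "W \<in> borel_measurable M" unfolding W_def by measurable
  have "(\<integral>\<^sup>+x. W x \<partial>M) = (\<Sum>i. \<integral>\<^sup>+x. ennreal (4 ^ i * (cmod (D i x))\<^sup>2) \<partial>M)"
    unfolding W_def by (rule nn_integral_suminf) measurable
  also have "\<dots> \<le> (\<Sum>i. ennreal ((1/2) ^ i))"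
  proof (rule suminf_le)
    fix i
    have "(\<integral>\<^sup>+x. ennreal (4 ^ i * (cmod (D i x))\<^sup>2) \<partial>M) = ennreal (4 ^ i) * (\<integral>\<^sup>+x. ennreal ((cmod (D i x))\<^sup>2) \<partial>M)"
      by (subst nn_integral_cmult[symmetric]) (auto simp: ennreal_mult)
    also have "\<dots> \<le> ennreal (4 ^ i) * ennreal ((1/8) ^ i)"
      by (rule mult_left_mono[OF Dnorm]) simp
    also have "\<dots> = ennreal ((1/2) ^ i)"
      by (simp add: ennreal_mult[symmetric] power_mult_distrib[symmetric])
    finally show "(\<integral>\<^sup>+x. ennreal (4 ^ i * (cmod (D i x))\<^sup>2) \<partial>M) \<le> ennreal ((1/2) ^ i)" .
  qed auto
  also have "\<dots> = ennreal 2"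
    by (subst suminf_ennreal2) (auto simp: suminf_geometric)
  finally have "(\<integral>\<^sup>+x. W x \<partial>M) \<noteq> \<infinity>" by (auto simp: top_unique)
  then have AEW: "AE x in M. W x \<noteq> \<infinity>"
    by (intro nn_integral_PInf_AE) auto
  have conv: "convergent (\<lambda>i. F (nn i) x)" if Wx: "W x \<noteq> \<infinity>" for x
  proof -
    have sm: "summable (\<lambda>i. 4 ^ i * (cmod (D i x))\<^sup>2)"
      using Wx unfolding W_def by (intro summable_suminf_not_top) auto
    define B where "B = (\<Sum>i. 4 ^ i * (cmod (D i x))\<^sup>2)"
    have Bi: "4 ^ i * (cmod (D i x))\<^sup>2 \<le> B" for i
      unfolding B_def using sum_le_suminf[OF sm, of "{i}"] by simp
    have Dle: "cmod (D i x) \<le> sqrt B * (1/2) ^ i" for i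
    proof -
      have "(cmod (D i x))\<^sup>2 \<le> B / 4 ^ i" using Bi[of i] by (simp add: field_simps)
      then have "cmod (D i x) \<le> sqrt (B / 4 ^ i)" by (simp add: real_le_rsqrt)
      also have "sqrt (B / 4 ^ i) = sqrt B * (1/2) ^ i"
        by (simp add: real_sqrt_divide real_sqrt_power power_divide)
      finally show ?thesis .
    qed
    have "summable (\<lambda>i. D i x)"
      by (rule summable_comparison_test'[where g="\<lambda>i. sqrt B * (1/2) ^ i" and N=0])
         (auto intro!: summable_mult summable_geometric simp: Dle)
    then have "(\<lambda>i. \<Sum>j<i. D j x) \<longlonglongrightarrow> (\<Sum>j. D j x)" by (rule summable_LIMSEQ)
    then have "(\<lambda>i. F (nn 0) x + (\<Sum>j<i. D j x)) \<longlonglongrightarrow> F (nn 0) x + (\<Sum>j. D j x)"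
      by (intro tendsto_intros)
    moreover have "F (nn 0) x + (\<Sum>j<i. D j x) = F (nn i) x" for i
      unfolding D_def by (subst sum_lessThan_telescope[of "\<lambda>j. F (nn j) x"]) simp
    ultimately show ?thesis by (auto simp: convergent_def)
  qed
  define h where "h x = (if W x \<noteq> \<infinity> then lim (\<lambda>i. F (nn i) x) else 0)" for x
  have hlim: "(\<lambda>i. F (nn i) x) \<longlonglongrightarrow> h x" if "W x \<noteq> \<infinity>" for x
    using conv[OF that] that unfolding h_def by (simp add: convergent_LIMSEQ_iff)
  have hmeas: "h \<in> borel_measurable M"
  proof (rule borel_measurable_LIMSEQ_metric[where f="\<lambda>i x. if W x \<noteq> \<infinity> then F (nn i) x else 0"])
    fix i show "(\<lambda>x. if W x \<noteq> \<infinity> then F (nn i) x else 0) \<in> borel_measurable M" by measurable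
  next
    fix x
    show "(\<lambda>i. if W x \<noteq> \<infinity> then F (nn i) x else 0) \<longlonglongrightarrow> h x"
      using hlim[of x] by (cases "W x \<noteq> \<infinity>") (auto simp: h_def)
  qed
  have hbound: "(\<integral>\<^sup>+x. ennreal ((cmod (F n x - h x))\<^sup>2) \<partial>M) \<le> ennreal (T n)" for n
  proof -
    have "(\<integral>\<^sup>+x. ennreal ((cmod (F n x - h x))\<^sup>2) \<partial>M) = (\<integral>\<^sup>+x. liminf (\<lambda>i. ennreal ((cmod (F n x - F (nn i) x))\<^sup>2)) \<partial>M)"
    proof (rule nn_integral_cong_AE)
      show "AE x in M. ennreal ((cmod (F n x - h x))\<^sup>2) = liminf (\<lambda>i. ennreal ((cmod (F n x - F (nn i) x))\<^sup>2))"
        using AEW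
      proof eventually_elim
        case (elim x)
        have "(\<lambda>i. ennreal ((cmod (F n x - F (nn i) x))\<^sup>2)) \<longlonglongrightarrow> ennreal ((cmod (F n x - h x))\<^sup>2)"
          by (intro tendsto_intros hlim[OF elim])
        from lim_imp_Liminf[OF trivial_limit_sequentially this] show ?case by simp
      qed
    qed
    also have "\<dots> \<le> liminf (\<lambda>i. \<integral>\<^sup>+x. ennreal ((cmod (F n x - F (nn i) x))\<^sup>2) \<partial>M)"
      by (rule nn_integral_liminf) measurable
    also have "\<dots> \<le> ennreal (T n)"
    proof (rule Liminf_le)
      show "\<forall>\<^sub>F i in sequentially. (\<integral>\<^sup>+x. ennreal ((cmod (F n x - F (nn i) x))\<^sup>2) \<partial>M) \<le> ennreal (T n)"
        unfolding eventually_sequentially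
      proof (intro exI allI impI)
        fix i assume "i \<ge> n"
        then have "n \<le> nn i" using nn_ge(1)[of i] by linarith
        from bound[OF this] show "(\<integral>\<^sup>+x. ennreal ((cmod (F n x - F (nn i) x))\<^sup>2) \<partial>M) \<le> ennreal (T n)"
          by (simp add: norm_minus_commute)
      qed
    qed simp
    finally show ?thesis .
  qed
  have "(\<lambda>n. \<integral>\<^sup>+x. ennreal ((cmod (F n x - h x))\<^sup>2) \<partial>M) \<longlonglongrightarrow> 0"
  proof (rule tendsto_sandwich[where f="\<lambda>_. 0" and h="\<lambda>n. ennreal (T n)"])
    show "(\<lambda>n. ennreal (T n)) \<longlonglongrightarrow> 0" using tendsto_ennrealI[OF T0] by simp
  qed (auto simp: hbound)
  then show ?thesis using hmeas by blast
qed



lemma tail_tendsto: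
  fixes f :: "nat \<Rightarrow> real"
  assumes "summable f"
  shows "(\<lambda>m. \<Sum>i. f (i + m)) \<longlonglongrightarrow> 0"
proof (rule LIMSEQ_I)
  fix r :: real assume "r > 0"
  from suminf_exist_split[OF this assms] obtain N where "\<forall>n\<ge>N. norm (\<Sum>i. f (i + n)) < r" by blast
  then show "\<exists>no. \<forall>n\<ge>no. norm ((\<Sum>i. f (i + n)) - 0) < r" by auto
qed

lemma Linv_spec:
  assumes b: "b > -1" and g: "g \<in> L2 (mu b)"
  shows "Linv b g \<in> borel_measurable (mu b) \<and>
    (\<lambda>n. \<integral>\<^sup>+x. ennreal ((cmod (Linv_partial b g n x - Linv b g x))\<^sup>2) \<partial>mu b) \<longlonglongrightarrow> 0"
proof -
  have "\<exists>h. h \<in> borel_measurable (mu b) \<and>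
    (\<lambda>n. \<integral>\<^sup>+x. ennreal ((cmod (Linv_partial b g n x - h x))\<^sup>2) \<partial>mu b) \<longlonglongrightarrow> 0"
    unfolding Linv_partial_Sfun
  proof (rule L2_cauchy_limit[where T="\<lambda>m. \<Sum>i. (cmod (wco b g (i + m)))\<^sup>2"])
    show "(\<lambda>m. \<Sum>i. (cmod (wco b g (i + m)))\<^sup>2) \<longlonglongrightarrow> 0"
      by (rule tail_tendsto[OF w_summable[OF b g]])
    fix m n :: nat assume "m \<le> n"
    then show "(\<integral>\<^sup>+x. ennreal ((cmod (Sfun b (wco b g) {..<n} x - Sfun b (wco b g) {..<m} x))\<^sup>2) \<partial>mu b)
         \<le> ennreal (\<Sum>i. (cmod (wco b g (i + m)))\<^sup>2)"
      by (rule diff_norm[OF b g])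
  qed simp
  then show ?thesis unfolding Linv_def by (rule someI_ex)
qed

lemma L2_ae_subseq:
  fixes F :: "nat \<Rightarrow> 'a \<Rightarrow> complex"
  assumes [measurable]: "\<And>n. F n \<in> borel_measurable M" "h \<in> borel_measurable M"
    and lim: "(\<lambda>n. \<integral>\<^sup>+x. ennreal ((cmod (F n x - h x))\<^sup>2) \<partial>M) \<longlonglongrightarrow> 0"
  shows "\<exists>r. AE x in M. (\<lambda>i. F (r i) x) \<longlonglongrightarrow> h x"
proof -
  have "\<forall>i. \<exists>n. (\<integral>\<^sup>+x. ennreal ((cmod (F n x - h x))\<^sup>2) \<partial>M) < ennreal ((1/2) ^ i)"
  proof
    fix i :: nat
    have "ennreal ((1/2) ^ i) > 0" by simp
    from order_tendstoD(2)[OF lim this] show "\<exists>n. (\<integral>\<^sup>+x. ennreal ((cmod (F n x - h x))\<^sup>2) \<partial>M) < ennreal ((1/2) ^ i)"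
      by (auto simp: eventually_sequentially)
  qed
  then obtain r where r: "\<And>i. (\<integral>\<^sup>+x. ennreal ((cmod (F (r i) x - h x))\<^sup>2) \<partial>M) < ennreal ((1/2) ^ i)" by metis
  define V where "V x = (\<Sum>i. ennreal ((cmod (F (r i) x - h x))\<^sup>2))" for x
  have [measurable]: "V \<in> borel_measurable M" unfolding V_def by measurable
  have "(\<integral>\<^sup>+x. V x \<partial>M) = (\<Sum>i. \<integral>\<^sup>+x. ennreal ((cmod (F (r i) x - h x))\<^sup>2) \<partial>M)"
    unfolding V_def by (rule nn_integral_suminf) measurable
  also have "\<dots> \<le> (\<Sum>i. ennreal ((1/2) ^ i))"
    by (rule suminf_le) (auto intro: less_imp_le r)
  also have "\<dots> = ennreal 2"
    by (subst suminf_ennreal2) (auto simp: suminf_geometric)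
  finally have "(\<integral>\<^sup>+x. V x \<partial>M) \<noteq> \<infinity>" by (auto simp: top_unique)
  then have AEV: "AE x in M. V x \<noteq> \<infinity>"
    by (intro nn_integral_PInf_AE) auto
  have "AE x in M. (\<lambda>i. F (r i) x) \<longlonglongrightarrow> h x"
    using AEV
  proof eventually_elim
    case (elim x)
    have "summable (\<lambda>i. (cmod (F (r i) x - h x))\<^sup>2)"
      using elim unfolding V_def by (intro summable_suminf_not_top) auto
    then have "(\<lambda>i. (cmod (F (r i) x - h x))\<^sup>2) \<longlonglongrightarrow> 0" by (rule summable_LIMSEQ_zero)
    then have "(\<lambda>i. sqrt ((cmod (F (r i) x - h x))\<^sup>2)) \<longlonglongrightarrow> sqrt 0" by (rule tendsto_real_sqrt)
    then have "(\<lambda>i. cmod (F (r i) x - h x)) \<longlonglongrightarrow> 0" by simp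
    then have "(\<lambda>i. F (r i) x - h x) \<longlonglongrightarrow> 0" by (simp add: tendsto_norm_zero_iff)
    then show ?case by (simp add: Lim_null[symmetric])
  qed
  then show ?thesis by blast
qed

lemma key_estimate:
  assumes b: "b > 0" and g: "g \<in> L2 (mu b)"
  shows "(\<integral>\<^sup>+x. ennreal ((cmod (Linv b g x))\<^sup>2 / x\<^sup>2) \<partial>mu b) \<le> ennreal ((\<integral>x. (cmod (g x))\<^sup>2 \<partial>mu b) / b\<^sup>2)"
proof -
  have b1: "b > -1" using b by simp
  note spec = Linv_spec[OF b1 g]
  have [measurable]: "Linv b g \<in> borel_measurable borel" using spec by simp
  have [measurable]: "Linv_partial b g n \<in> borel_measurable borel" for n
    unfolding Linv_partial_Sfun by simp
  obtain r where r: "AE x in mu b. (\<lambda>i. Linv_partial b g (r i) x) \<longlonglongrightarrow> Linv b g x"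
    using L2_ae_subseq[of "Linv_partial b g" "mu b" "Linv b g"] spec by auto
  have bnd: "(\<integral>\<^sup>+x. ennreal ((cmod (Linv_partial b g n x))\<^sup>2 / x\<^sup>2) \<partial>mu b) \<le> ennreal ((\<integral>x. (cmod (g x))\<^sup>2 \<partial>mu b) / b\<^sup>2)" for n
  proof -
    have "(\<integral>\<^sup>+x. ennreal ((cmod (Linv_partial b g n x))\<^sup>2 / x\<^sup>2) \<partial>mu b)
       \<le> ennreal ((\<Sum>k\<in>{..<n}. (4 * real k + 2 * b + 2) * (cmod (wco b g k))\<^sup>2) / b\<^sup>2)"
      unfolding Linv_partial_Sfun by (rule Sfun_weighted[OF b]) simp
    also have "\<dots> = ennreal ((\<Sum>k\<in>{..<n}. (cmod (lag_coeff b g k))\<^sup>2) / b\<^sup>2)"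
      by (simp add: w_sq[OF b1])
    also have "\<dots> \<le> ennreal ((\<integral>x. (cmod (g x))\<^sup>2 \<partial>mu b) / b\<^sup>2)"
      using bessel[OF b1 g, of "{..<n}"] b by (intro ennreal_leI divide_right_mono) auto
    finally show ?thesis .
  qed
  have "(\<integral>\<^sup>+x. ennreal ((cmod (Linv b g x))\<^sup>2 / x\<^sup>2) \<partial>mu b)
      = (\<integral>\<^sup>+x. liminf (\<lambda>i. ennreal ((cmod (Linv_partial b g (r i) x))\<^sup>2 / x\<^sup>2)) \<partial>mu b)"
  proof (rule nn_integral_cong_AE)
    show "AE x in mu b. ennreal ((cmod (Linv b g x))\<^sup>2 / x\<^sup>2) = liminf (\<lambda>i. ennreal ((cmod (Linv_partial b g (r i) x))\<^sup>2 / x\<^sup>2))"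
      using r
    proof eventually_elim
      case (elim x)
      have "(\<lambda>i. ennreal ((cmod (Linv_partial b g (r i) x))\<^sup>2 / x\<^sup>2)) \<longlonglongrightarrow> ennreal ((cmod (Linv b g x))\<^sup>2 / x\<^sup>2)"
      proof (cases "x = 0")
        case True then show ?thesis by simp
      next
        case False then show ?thesis by (intro tendsto_intros elim) simp
      qed
      from lim_imp_Liminf[OF trivial_limit_sequentially this] show ?case by simp
    qed
  qed
  also have "\<dots> \<le> liminf (\<lambda>i. \<integral>\<^sup>+x. ennreal ((cmod (Linv_partial b g (r i) x))\<^sup>2 / x\<^sup>2) \<partial>mu b)"
    by (rule nn_integral_liminf) (unfold meas_mu_iff, measurable)
  also have "\<dots> \<le> ennreal ((\<integral>x. (cmod (g x))\<^sup>2 \<partial>mu b) / b\<^sup>2)"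
    by (rule Liminf_le) (auto simp: bnd)
  finally show ?thesis .
qed



lemma powr_sq: "(x::real) > 0 \<Longrightarrow> (x powr t)\<^sup>2 = x powr (2 * t)"
  using powr_power[of x t 2] by simp

lemma L2_transfer:
  assumes f: "f \<in> L2 (mu al)" and t: "t \<ge> 0"
  shows "(\<lambda>y. f y / complex_of_real (y powr t)) \<in> L2 (mu (al + t))"
    and "(\<integral>\<^sup>+x. ennreal ((cmod (f x / complex_of_real (x powr t)))\<^sup>2) \<partial>mu (al + t))
         = (\<integral>\<^sup>+x. ennreal ((cmod (f x))\<^sup>2) \<partial>mu al)"
proof -
  have [measurable]: "f \<in> borel_measurable borel" using L2_meas[OF f] by simp
  show eq: "(\<integral>\<^sup>+x. ennreal ((cmod (f x / complex_of_real (x powr t)))\<^sup>2) \<partial>mu (al + t))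
         = (\<integral>\<^sup>+x. ennreal ((cmod (f x))\<^sup>2) \<partial>mu al)"
  proof (subst (1 2) nn_mu, simp, simp, rule nn_integral_cong)
    fix x :: real
    show "ennreal (indicator {0<..} x * x powr (2 * (al + t) + 1)) * ennreal ((cmod (f x / complex_of_real (x powr t)))\<^sup>2) =
          ennreal (indicator {0<..} x * x powr (2 * al + 1)) * ennreal ((cmod (f x))\<^sup>2)"
    proof (cases "x > 0")
      case True
      have e1: "x powr (2 * (al + t) + 1) = x powr (2 * al + 1) * (x powr t)\<^sup>2"
        using True by (simp add: powr_sq powr_add[symmetric] algebra_simps)
      have pt: "x powr t > 0" using True by simp
      have "x powr (2 * (al + t) + 1) * (cmod (f x / complex_of_real (x powr t)))\<^sup>2 = x powr (2 * al + 1) * (cmod (f x))\<^sup>2"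
        unfolding e1 using pt by (simp add: norm_divide power_divide)
      then show ?thesis using True by (simp add: ennreal_mult[symmetric])
    next
      case False then show ?thesis by simp
    qed
  qed
  show "(\<lambda>y. f y / complex_of_real (y powr t)) \<in> L2 (mu (al + t))"
    using f by (simp add: L2_def eq)
qed

theorem mainTheorem11:
  fixes \<alpha> a :: real
  assumes "\<alpha> \<ge> -1/2" and "a \<ge> 1"
  shows "\<exists>C::real. \<forall>j::nat. j \<ge> 1 \<longrightarrow> (\<forall>f \<in> L2 (mu \<alpha>).
     (\<integral>\<^sup>+ x. ennreal ((cmod (complex_of_real (real j * x powr (a * real j))
          * Top (\<alpha> + a * real j) (\<lambda>y. f y / complex_of_real (y powr (a * real j))) x))\<^sup>2) \<partial>mu \<alpha>)
     \<le> ennreal C * (\<integral>\<^sup>+ x. ennreal ((cmod (f x))\<^sup>2) \<partial>mu \<alpha>))"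
proof (intro exI[of _ 4] allI impI ballI)
  fix j :: nat and f assume j: "j \<ge> 1" and f: "f \<in> L2 (mu \<alpha>)"
  define t where "t = a * real j"
  define b where "b = \<alpha> + t"
  define g where "g = (\<lambda>y. f y / complex_of_real (y powr t))"
  have t0: "t \<ge> real j" using assms(2) j by (simp add: t_def)
  have bj: "b \<ge> real j / 2" using assms(1) j t0 by (simp add: b_def)
  have b: "b > 0" using bj j by linarith
  have jb: "(real j)\<^sup>2 / b\<^sup>2 \<le> 4"
  proof -
    have "real j \<le> 2 * b" using bj by simp
    then have "(real j)\<^sup>2 \<le> (2 * b)\<^sup>2" by (intro power_mono) auto
    then show ?thesis using b by (simp add: field_simps power_mult_distrib)
  qed
  have gL2: "g \<in> L2 (mu b)" unfolding g_def b_def using L2_transfer(1)[OF f] t0 by simp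
  have gnorm: "(\<integral>\<^sup>+x. ennreal ((cmod (g x))\<^sup>2) \<partial>mu b) = (\<integral>\<^sup>+x. ennreal ((cmod (f x))\<^sup>2) \<partial>mu \<alpha>)"
    unfolding g_def b_def using L2_transfer(2)[OF f] t0 by simp
  have [measurable]: "Linv b g \<in> borel_measurable borel" using Linv_spec[of b g] b gL2 by simp
  have "(\<integral>\<^sup>+ x. ennreal ((cmod (complex_of_real (real j * x powr t) * Top b g x))\<^sup>2) \<partial>mu \<alpha>)
      = (\<integral>\<^sup>+ x. ennreal ((real j)\<^sup>2) * ennreal ((cmod (Linv b g x))\<^sup>2 / x\<^sup>2) \<partial>mu b)"
  proof -
    have m1: "(\<lambda>x. ennreal ((cmod (complex_of_real (real j * x powr t) * Top b g x))\<^sup>2)) \<in> borel_measurable borel"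
      unfolding Top_def by measurable
    have m2: "(\<lambda>x. ennreal ((real j)\<^sup>2) * ennreal ((cmod (Linv b g x))\<^sup>2 / x\<^sup>2)) \<in> borel_measurable borel"
      by measurable
    show ?thesis unfolding nn_mu[OF m1] nn_mu[OF m2]
    proof (rule nn_integral_cong)
    fix x :: real
    show "ennreal (indicator {0<..} x * x powr (2 * \<alpha> + 1)) * ennreal ((cmod (complex_of_real (real j * x powr t) * Top b g x))\<^sup>2) =
      ennreal (indicator {0<..} x * x powr (2 * b + 1)) * (ennreal ((real j)\<^sup>2) * ennreal ((cmod (Linv b g x))\<^sup>2 / x\<^sup>2))"
    proof (cases "x > 0")
      case True
      have e1: "x powr (2 * b + 1) = x powr (2 * \<alpha> + 1) * (x powr t)\<^sup>2"
        using True by (simp add: b_def powr_sq powr_add[symmetric] algebra_simps)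
      have "x powr (2 * \<alpha> + 1) * (cmod (complex_of_real (real j * x powr t) * Top b g x))\<^sup>2 =
            x powr (2 * b + 1) * ((real j)\<^sup>2 * ((cmod (Linv b g x))\<^sup>2 / x\<^sup>2))"
        unfolding e1 Top_def using True by (simp add: norm_mult norm_divide power_mult_distrib power_divide)
      then show ?thesis using True by (simp add: ennreal_mult[symmetric])
    next
      case False then show ?thesis by simp
    qed
    qed
  qed
  also have "\<dots> = ennreal ((real j)\<^sup>2) * (\<integral>\<^sup>+ x. ennreal ((cmod (Linv b g x))\<^sup>2 / x\<^sup>2) \<partial>mu b)"
    by (rule nn_integral_cmult) (unfold meas_mu_iff, measurable)
  also have "\<dots> \<le> ennreal ((real j)\<^sup>2) * ennreal ((\<integral>x. (cmod (g x))\<^sup>2 \<partial>mu b) / b\<^sup>2)"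
    by (rule mult_left_mono[OF key_estimate[OF b gL2]]) simp
  also have "\<dots> = ennreal ((real j)\<^sup>2 / b\<^sup>2) * ennreal (\<integral>x. (cmod (g x))\<^sup>2 \<partial>mu b)"
    by (simp add: ennreal_mult[symmetric] integral_nonneg_AE)
  also have "\<dots> \<le> ennreal 4 * ennreal (\<integral>x. (cmod (g x))\<^sup>2 \<partial>mu b)"
    by (intro mult_right_mono ennreal_leI jb) simp
  also have "\<dots> = ennreal 4 * (\<integral>\<^sup>+ x. ennreal ((cmod (f x))\<^sup>2) \<partial>mu \<alpha>)"
    using L2_nn_eq[OF gL2] gnorm by simp
  finally show "(\<integral>\<^sup>+ x. ennreal ((cmod (complex_of_real (real j * x powr (a * real j))
          * Top (\<alpha> + a * real j) (\<lambda>y. f y / complex_of_real (y powr (a * real j))) x))\<^sup>2) \<partial>mu \<alpha>)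
     \<le> ennreal 4 * (\<integral>\<^sup>+ x. ennreal ((cmod (f x))\<^sup>2) \<partial>mu \<alpha>)"
    unfolding t_def[symmetric] b_def[symmetric] g_def[symmetric] .
qed


end
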